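(* Let $d\ge 2$, $2\le k\le d+1$, let $y_1,\dots,y_N\in\{1,\dots,k\}$ be labels of a class-balanced dataset (each class has exactly $N/k\ge 1$ samples), and let $s>0$. For $\boldsymbol w_1,\dots,\boldsymbol w_k,\boldsymbol z_1,\dots,\boldsymbol z_N\in\mathbb S^{d-1}$ let $\theta_{ij}=\arccos(\boldsymbol w_j^{\mathrm T}\boldsymbol z_i)\in[0,\pi]$, and for a function $f:[0,\pi]\to\mathbb R$ define the empirical risk $$L_f=\frac1N\sum_{i=1}^N-\log\frac{\exp(s f(\theta_{iy_i}))}{\exp(s f(\theta_{iy_i}))+\sum_{j\ne y_i}\exp(s\cos\theta_{ij})}.$$ Consider the following choices of $f$: (NormFace) $f(\theta)=\cos\theta$; (CosFace / AM-Softmax) $f(\theta)=\cos\theta-m$ with $m\ge0$; (ArcFace) $f(\theta)=\cos(\theta+m)$ with $m\in[0,\pi/2]$ and $\cos m\ge\frac12$; (A-Softmax with feature normalization) $f(\theta)=(-1)^\ell\cos(m\theta)-2\ell$ for $\theta\in[\ell\pi/m,(\ell+1)\pi/m]$, $\ell=0,\dots,m-1$, with $m\ge1$ an integer. Then for each of these losses, the set of minimizers of $L_f$ over $(\mathbb S^{d-1})^{k+N}$ is exactly the set of configurations with $\boldsymbol w_i^{\mathrm T}\boldsymbol w_j=-\frac1{k-1}$ for all $i\ne j$ and $\boldsymbol z_i=\boldsymbol w_{y_i}$ for all $i$; in particular all these losses share the same optimal solutions.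
   Context: $\mathbb S^{d-1}$ is the unit sphere in $\mathbb R^d$; $\boldsymbol w_j$ are class prototypes and $\boldsymbol z_i$ is the feature of a sample with label $y_i$. *)

theory Defs
  imports "HOL-Analysis.Analysis"
begin

definition emp_risk ::
  "(real \<Rightarrow> real) \<Rightarrow> real \<Rightarrow> nat \<Rightarrow> nat \<Rightarrow> (nat \<Rightarrow> nat)
     \<Rightarrow> (nat \<Rightarrow> real^'n::finite) \<Rightarrow> (nat \<Rightarrow> real^'n) \<Rightarrow> real" where
  "emp_risk f s k N y w z =
     (1 / real N) * (\<Sum>i\<in>{1..N}.
        - ln (exp (s * f (arccos (w (y i) \<bullet> z i))) /
              (exp (s * f (arccos (w (y i) \<bullet> z i)))
               + (\<Sum>j\<in>{1..k} - {y i}. exp (s * cos (arccos (w j \<bullet> z i)))))))"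

definition on_sphere :: "nat \<Rightarrow> nat \<Rightarrow> (nat \<Rightarrow> real^'n::finite) \<Rightarrow> (nat \<Rightarrow> real^'n) \<Rightarrow> bool" where
  "on_sphere k N w z \<longleftrightarrow> (\<forall>j\<in>{1..k}. norm (w j) = 1) \<and> (\<forall>i\<in>{1..N}. norm (z i) = 1)"

definition is_minimizer ::
  "(real \<Rightarrow> real) \<Rightarrow> real \<Rightarrow> nat \<Rightarrow> nat \<Rightarrow> (nat \<Rightarrow> nat)
     \<Rightarrow> (nat \<Rightarrow> real^'n::finite) \<Rightarrow> (nat \<Rightarrow> real^'n) \<Rightarrow> bool" where
  "is_minimizer f s k N y w z \<longleftrightarrow> on_sphere k N w z \<and>
     (\<forall>(w'::nat \<Rightarrow> real^'n) z'. on_sphere k N w' z' \<longrightarrow>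
        emp_risk f s k N y w z \<le> emp_risk f s k N y w' z')"

definition normface :: "real \<Rightarrow> real" where
  "normface \<theta> = cos \<theta>"

definition cosface :: "real \<Rightarrow> real \<Rightarrow> real" where
  "cosface m \<theta> = cos \<theta> - m"

definition arcface :: "real \<Rightarrow> real \<Rightarrow> real" where
  "arcface m \<theta> = cos (\<theta> + m)"

text \<open>A-Softmax: on [l pi/m, (l+1) pi/m], l = 0..m-1, f = (-1)^l cos(m theta) - 2 l.
  The pieces agree at the breakpoints, so choosing l = min (m-1) (floor (m theta / pi))
  gives the intended function on [0, pi].\<close>
definition asoftmax :: "nat \<Rightarrow> real \<Rightarrow> real" where
  "asoftmax m \<theta> = (let l = min (m - 1) (nat \<lfloor>real m * \<theta> / pi\<rfloor>) in
      (-1) ^ l * cos (real m * \<theta>) - 2 * real l)"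

end

theory Submission
  imports Defs
begin

lemma exp_eq_one_plus: fixes x :: real assumes "exp x = 1 + x" shows "x = 0"
  using exp_minus_greater[of "-x"] assms by auto

lemma exp_tangent_sum:
  fixes u :: "'a \<Rightarrow> real"
  assumes J: "finite J" "J \<noteq> {}"
  defines "\<mu> \<equiv> (\<Sum>j\<in>J. u j) / real (card J)"
  shows "real (card J) * exp \<mu> \<le> (\<Sum>j\<in>J. exp (u j))"
    and "(\<Sum>j\<in>J. exp (u j)) = real (card J) * exp \<mu> \<Longrightarrow> \<forall>j\<in>J. u j = \<mu>"
proof -
  have cJ: "real (card J) > 0" using J by (simp add: card_gt_0_iff)
  have pt: "exp \<mu> * (1 + (u j - \<mu>)) \<le> exp (u j)" for j
  proof -
    have "exp (u j) = exp \<mu> * exp (u j - \<mu>)" by (simp add: exp_diff)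
    moreover have "exp \<mu> * (1 + (u j - \<mu>)) \<le> exp \<mu> * exp (u j - \<mu>)"
      by (rule mult_left_mono) (use exp_ge_add_one_self[of "u j - \<mu>"] in auto)
    ultimately show ?thesis by simp
  qed
  have s1: "(\<Sum>j\<in>J. exp \<mu> * (1 + (u j - \<mu>))) = real (card J) * exp \<mu>"
  proof -
    have "(\<Sum>j\<in>J. exp \<mu> * (1 + (u j - \<mu>))) = exp \<mu> * (real (card J) + (\<Sum>j\<in>J. u j) - real (card J) * \<mu>)"
    proof -
      have "(\<Sum>j\<in>J. exp \<mu> * (1 + (u j - \<mu>))) = exp \<mu> * (\<Sum>j\<in>J. (1 + (u j - \<mu>)))"
        by (rule sum_distrib_left[symmetric])
      also have "(\<Sum>j\<in>J. (1 + (u j - \<mu>))) = real (card J) + (\<Sum>j\<in>J. u j) - real (card J) * \<mu>"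
        by (simp add: sum.distrib sum_subtractf)
      finally show ?thesis .
    qed
    also have "(\<Sum>j\<in>J. u j) = real (card J) * \<mu>" using cJ unfolding \<mu>_def by simp
    finally show ?thesis by simp
  qed
  show "real (card J) * exp \<mu> \<le> (\<Sum>j\<in>J. exp (u j))"
    using s1 sum_mono[of J "\<lambda>j. exp \<mu> * (1 + (u j - \<mu>))" "\<lambda>j. exp (u j)"] pt by simp
  assume eq: "(\<Sum>j\<in>J. exp (u j)) = real (card J) * exp \<mu>"
  have "(\<Sum>j\<in>J. exp (u j) - exp \<mu> * (1 + (u j - \<mu>))) = 0"
    unfolding sum_subtractf eq s1 by simp
  then have z: "\<forall>j\<in>J. exp (u j) - exp \<mu> * (1 + (u j - \<mu>)) = 0"
  proof -
    have "\<forall>j\<in>J. 0 \<le> exp (u j) - exp \<mu> * (1 + (u j - \<mu>))" using pt by simp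
    then show ?thesis using sum_nonneg_eq_0_iff[OF J(1), of "\<lambda>j. exp (u j) - exp \<mu> * (1 + (u j - \<mu>))"] \<open>(\<Sum>j\<in>J. _) = 0\<close> by simp
  qed
  show "\<forall>j\<in>J. u j = \<mu>"
  proof
    fix j assume "j \<in> J"
    then have "exp (u j) = exp \<mu> * (1 + (u j - \<mu>))" using z by simp
    moreover have "exp (u j) = exp \<mu> * exp (u j - \<mu>)" by (simp add: exp_diff)
    ultimately have "exp (u j - \<mu>) = 1 + (u j - \<mu>)" by simp
    then have "u j - \<mu> = 0" by (rule exp_eq_one_plus)
    then show "u j = \<mu>" by simp
  qed
qed

lemma softplus_tangent:
  fixes K a x x0 :: real
  assumes K: "K > 0"
  defines "p \<equiv> K * exp (a * x0) / (1 + K * exp (a * x0))"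
  shows "ln (1 + K * exp (a * x0)) + a * p * (x - x0) \<le> ln (1 + K * exp (a * x))"
proof -
  define E0 where "E0 = exp (a * x0)"
  define \<delta> where "\<delta> = a * (x - x0)"
  have E0: "E0 > 0" unfolding E0_def by simp
  have p01: "0 \<le> p" "p \<le> 1" unfolding p_def using K
  proof -
    have "K * exp (a * x0) > 0" using K by simp
    then show "0 \<le> K * exp (a * x0) / (1 + K * exp (a * x0))" "K * exp (a * x0) / (1 + K * exp (a * x0)) \<le> 1"
      by (simp_all add: divide_le_eq_1)
  qed
  have "exp (p * \<delta>) = exp ((1 - p) * 0 + p * \<delta>)" by simp
  also have "\<dots> \<le> (1 - p) * exp 0 + p * exp \<delta>"
    using convex_onD[OF exp_convex, of p 0 \<delta>] p01 by simp
  finally have cvx: "exp (p * \<delta>) \<le> (1 - p) + p * exp \<delta>" by simp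
  have pos: "1 + K * E0 > 0" using K E0 by (simp add: add_pos_pos)
  have eq: "(1 - p) + p * exp \<delta> = (1 + K * exp (a * x)) / (1 + K * E0)"
  proof -
    have "a * x = a * x0 + \<delta>" unfolding \<delta>_def by (simp add: right_diff_distrib)
    then have ex: "exp (a * x) = E0 * exp \<delta>" unfolding E0_def by (simp only: exp_add)
    have pe: "p = K * E0 / (1 + K * E0)" unfolding p_def E0_def ..
    have "(1 - p) + p * exp \<delta> = ((1 + K * E0) - K * E0 + K * E0 * exp \<delta>) / (1 + K * E0)"
      unfolding pe using pos by (simp add: field_simps)
    also have "\<dots> = (1 + K * exp (a * x)) / (1 + K * E0)" unfolding ex by (simp add: mult.assoc)
    finally show ?thesis .
  qed
  have "p * \<delta> \<le> ln ((1 + K * exp (a * x)) / (1 + K * E0))"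
  proof -
    have "0 < exp (p * \<delta>)" by simp
    then have "ln (exp (p * \<delta>)) \<le> ln ((1 - p) + p * exp \<delta>)" using cvx by (simp only: ln_le_cancel_iff order_less_le_trans[OF _ cvx])
    then show ?thesis using eq by simp
  qed
  also have "\<dots> = ln (1 + K * exp (a * x)) - ln (1 + K * E0)"
  proof -
    have "1 + K * exp (a * x) > 0" using K by (simp add: add_pos_pos)
    then show ?thesis using pos by (simp add: ln_div)
  qed
  finally have "p * (a * (x - x0)) \<le> ln (1 + K * exp (a * x)) - ln (1 + K * exp (a * x0))"
    unfolding \<delta>_def E0_def .
  then show ?thesis by (simp add: mult.commute mult.left_commute)
qed

lemma unit_inner_eq_1:
  fixes u v :: "'a::real_inner"
  assumes "norm u = 1" "norm v = 1" "u \<bullet> v = 1"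
  shows "v = u"
proof -
  have "norm (v - u) ^ 2 = v \<bullet> v - 2 * (u \<bullet> v) + u \<bullet> u"
    by (simp add: power2_norm_eq_inner inner_diff_left inner_diff_right inner_commute)
  also have "\<dots> = 0" using assms by (simp add: norm_eq_1)
  finally show ?thesis by simp
qed

lemma sum_by_label:
  fixes g :: "nat \<Rightarrow> real" and y :: "nat \<Rightarrow> nat" and N k n :: nat
  assumes labels: "\<forall>i\<in>{1..N}. y i \<in> {1..k}"
    and fib: "\<forall>c\<in>{1..k}. card {i\<in>{1..N}. y i = c} = n"
  shows "(\<Sum>i\<in>{1..N}. g (y i)) = real n * (\<Sum>c\<in>{1..k}. g c)"
proof -
  have "(\<Sum>i\<in>{1..N}. g (y i)) = (\<Sum>c\<in>{1..k}. \<Sum>i\<in>{i\<in>{1..N}. y i = c}. g (y i))"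
    by (rule sum.group[symmetric]) (use labels in auto)
  also have "\<dots> = (\<Sum>c\<in>{1..k}. \<Sum>i\<in>{i\<in>{1..N}. y i = c}. g c)"
    by (rule sum.cong) auto
  also have "\<dots> = (\<Sum>c\<in>{1..k}. real n * g c)"
    by (rule sum.cong) (use fib in auto)
  finally show ?thesis by (simp add: sum_distrib_left)
qed

lemma cs_part:
  fixes w z :: "nat \<Rightarrow> real^'n::finite" and \<alpha> :: real
  assumes sph: "on_sphere k N w z"
    and labels: "\<forall>i\<in>{1..N}. y i \<in> {1..k}"
    and fib: "\<forall>c\<in>{1..k}. card {i\<in>{1..N}. y i = c} = n"
    and N: "N = k * n" and n: "n \<ge> 1"
    and \<alpha>: "2 * \<alpha> > real k" "\<alpha> > 0"
  defines "S \<equiv> (\<Sum>j\<in>{1..k}. w j)"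
  shows "(\<Sum>i\<in>{1..N}. (S - \<alpha> *\<^sub>R w (y i)) \<bullet> z i) \<ge> - (real N * \<alpha>)"
    and "(\<Sum>i\<in>{1..N}. (S - \<alpha> *\<^sub>R w (y i)) \<bullet> z i) = - (real N * \<alpha>) \<Longrightarrow>
          S = 0 \<and> (\<forall>i\<in>{1..N}. z i = w (y i))"
proof -
  define r where "r c = norm (S - \<alpha> *\<^sub>R w c)" for c
  have wn: "\<forall>j\<in>{1..k}. norm (w j) = 1" and zn: "\<forall>i\<in>{1..N}. norm (z i) = 1"
    using sph unfolding on_sphere_def by auto
  have T1: "- r (y i) \<le> (S - \<alpha> *\<^sub>R w (y i)) \<bullet> z i" if "i \<in> {1..N}" for i
  proof -
    have "\<bar>(S - \<alpha> *\<^sub>R w (y i)) \<bullet> z i\<bar> \<le> norm (S - \<alpha> *\<^sub>R w (y i)) * norm (z i)"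
      by (rule Cauchy_Schwarz_ineq2)
    then show ?thesis using zn that unfolding r_def by auto
  qed
  have T2: "(\<Sum>i\<in>{1..N}. r (y i)) = real n * (\<Sum>c\<in>{1..k}. r c)"
    by (rule sum_by_label[OF labels fib])
  have T3: "r c ^ 2 = S \<bullet> S - 2 * \<alpha> * (S \<bullet> w c) + \<alpha>^2" if "c \<in> {1..k}" for c
  proof -
    have "r c ^ 2 = S \<bullet> S - 2 * \<alpha> * (S \<bullet> w c) + \<alpha>^2 * (w c \<bullet> w c)"
      unfolding r_def power2_norm_eq_inner
      by (simp add: inner_diff_left inner_diff_right inner_commute algebra_simps power2_eq_square)
    also have "w c \<bullet> w c = 1" using wn that by (simp add: norm_eq_1)
    finally show ?thesis by simp
  qed
  have T4: "(\<Sum>c\<in>{1..k}. r c ^ 2) = real k * (S \<bullet> S) - 2 * \<alpha> * (S \<bullet> S) + real k * \<alpha>^2"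
  proof -
    have "(\<Sum>c\<in>{1..k}. r c ^ 2) = (\<Sum>c\<in>{1..k}. S \<bullet> S - 2 * \<alpha> * (S \<bullet> w c) + \<alpha>^2)"
      by (rule sum.cong) (use T3 in auto)
    also have "\<dots> = real k * (S \<bullet> S) - 2 * \<alpha> * (\<Sum>c\<in>{1..k}. S \<bullet> w c) + real k * \<alpha>^2"
      by (simp add: sum.distrib sum_subtractf sum_distrib_left)
    also have "(\<Sum>c\<in>{1..k}. S \<bullet> w c) = S \<bullet> S" unfolding S_def by (simp add: inner_sum_right)
    finally show ?thesis .
  qed
  have T5: "r c \<le> (r c ^ 2 + \<alpha>^2) / (2 * \<alpha>)" for c
  proof -
    have "0 \<le> (r c - \<alpha>)^2" by simp
    then have "2 * \<alpha> * r c \<le> r c ^ 2 + \<alpha>^2" by (simp add: power2_eq_square algebra_simps)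
    then show ?thesis using \<alpha> by (simp add: field_simps)
  qed
  have SS: "S \<bullet> S \<ge> 0" by simp
  have T6: "(\<Sum>c\<in>{1..k}. r c) \<le> real k * \<alpha> - (2 * \<alpha> - real k) * (S \<bullet> S) / (2 * \<alpha>)"
  proof -
    have "(\<Sum>c\<in>{1..k}. r c) \<le> (\<Sum>c\<in>{1..k}. (r c ^ 2 + \<alpha>^2) / (2 * \<alpha>))"
      by (rule sum_mono) (rule T5)
    also have "\<dots> = ((\<Sum>c\<in>{1..k}. r c ^ 2) + real k * \<alpha>^2) / (2 * \<alpha>)"
      by (simp add: sum_divide_distrib[symmetric] sum.distrib)
    also have "\<dots> = real k * \<alpha> - (2 * \<alpha> - real k) * (S \<bullet> S) / (2 * \<alpha>)"
      unfolding T4 using \<alpha> by (simp add: field_simps power2_eq_square)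
    finally show ?thesis .
  qed
  have low: "- (\<Sum>i\<in>{1..N}. r (y i)) \<le> (\<Sum>i\<in>{1..N}. (S - \<alpha> *\<^sub>R w (y i)) \<bullet> z i)"
    using sum_mono[of "{1..N}" "\<lambda>i. - r (y i)"] T1 by (simp add: sum_negf)
  have gap: "(2 * \<alpha> - real k) * (S \<bullet> S) / (2 * \<alpha>) \<ge> 0"
    using \<alpha> SS by simp
  have mid: "- (\<Sum>i\<in>{1..N}. r (y i)) \<ge> - (real N * \<alpha>) + real n * ((2 * \<alpha> - real k) * (S \<bullet> S) / (2 * \<alpha>))"
  proof -
    have "real n * (\<Sum>c\<in>{1..k}. r c) \<le> real n * (real k * \<alpha> - (2 * \<alpha> - real k) * (S \<bullet> S) / (2 * \<alpha>))"
      using T6 by (simp add: mult_left_mono)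
    then show ?thesis unfolding T2 by (simp add: N algebra_simps)
  qed
  have gap2: "real n * ((2 * \<alpha> - real k) * (S \<bullet> S) / (2 * \<alpha>)) \<ge> 0" using gap by (rule mult_nonneg_nonneg[OF of_nat_0_le_iff])
  show "(\<Sum>i\<in>{1..N}. (S - \<alpha> *\<^sub>R w (y i)) \<bullet> z i) \<ge> - (real N * \<alpha>)"
    using low mid gap2 by linarith
  assume eq: "(\<Sum>i\<in>{1..N}. (S - \<alpha> *\<^sub>R w (y i)) \<bullet> z i) = - (real N * \<alpha>)"
  have "real n * ((2 * \<alpha> - real k) * (S \<bullet> S) / (2 * \<alpha>)) \<le> 0" using low mid eq by linarith
  moreover have "real n > 0" using n by simp
  ultimately have "(2 * \<alpha> - real k) * (S \<bullet> S) / (2 * \<alpha>) \<le> 0"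
    using mult_pos_pos[of "real n" "(2 * \<alpha> - real k) * (S \<bullet> S) / (2 * \<alpha>)"] by linarith
  then have "(2 * \<alpha> - real k) * (S \<bullet> S) \<le> 0" using \<alpha> by (simp add: divide_le_0_iff)
  then have "S \<bullet> S \<le> 0" using \<alpha> by (simp add: mult_le_0_iff)
  then have S0: "S = 0" using SS by simp
  have eq2: "(\<Sum>i\<in>{1..N}. (S - \<alpha> *\<^sub>R w (y i)) \<bullet> z i + r (y i)) = 0"
    using low mid gap2 eq by (simp add: sum.distrib)
  have nn: "\<forall>i\<in>{1..N}. 0 \<le> (S - \<alpha> *\<^sub>R w (y i)) \<bullet> z i + r (y i)" using T1 by force
  have each: "\<forall>i\<in>{1..N}. (S - \<alpha> *\<^sub>R w (y i)) \<bullet> z i + r (y i) = 0"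
    using sum_nonneg_eq_0_iff[of "{1..N}" "\<lambda>i. (S - \<alpha> *\<^sub>R w (y i)) \<bullet> z i + r (y i)"] nn eq2 by simp
  have "\<forall>i\<in>{1..N}. z i = w (y i)"
  proof
    fix i assume i: "i \<in> {1..N}"
    have wy: "norm (w (y i)) = 1" using wn labels i by auto
    have "- \<alpha> * (w (y i) \<bullet> z i) + \<alpha> = 0"
      using each i wy \<alpha> unfolding r_def S0 by simp
    then have "w (y i) \<bullet> z i = 1" using \<alpha> by (simp add: algebra_simps)
    then show "z i = w (y i)" using unit_inner_eq_1 wy zn i by blast
  qed
  then show "S = 0 \<and> (\<forall>i\<in>{1..N}. z i = w (y i))" using S0 by simp
qed

lemma loss_rewrite:
  fixes F s :: real and b :: "nat \<Rightarrow> real" and J :: "nat set"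
  assumes b: "\<forall>j\<in>J. -1 \<le> b j \<and> b j \<le> 1"
  shows "- ln (exp (s*F) / (exp (s*F) + (\<Sum>j\<in>J. exp (s * cos (arccos (b j))))))
         = ln (1 + (\<Sum>j\<in>J. exp (s*(b j - F))))"
proof -
  have T: "(\<Sum>j\<in>J. exp (s * cos (arccos (b j)))) = (\<Sum>j\<in>J. exp (s * b j))"
    by (rule sum.cong) (use b cos_arccos in auto)
  define E where "E = exp (s*F)"
  define T where "T = (\<Sum>j\<in>J. exp (s * b j))"
  have E: "E > 0" unfolding E_def by simp
  have T0: "T \<ge> 0" unfolding T_def by (simp add: sum_nonneg)
  have "- ln (E / (E + T)) = ln ((E + T) / E)"
    using E T0 by (simp add: ln_div)
  also have "(E + T) / E = 1 + T / E" using E by (simp add: field_simps)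
  also have "T / E = (\<Sum>j\<in>J. exp (s*(b j - F)))"
    unfolding T_def E_def sum_divide_distrib
    by (rule sum.cong) (simp_all add: exp_diff[symmetric] right_diff_distrib)
  finally show ?thesis unfolding T E_def T_def .
qed

lemma main_bound:
  fixes f :: "real \<Rightarrow> real" and s f0 c :: real and k N n :: nat and y :: "nat \<Rightarrow> nat"
    and w z :: "nat \<Rightarrow> real^'n::finite"
  assumes sph: "on_sphere k N w z"
    and labels: "\<forall>i\<in>{1..N}. y i \<in> {1..k}"
    and fib: "\<forall>c\<in>{1..k}. card {i\<in>{1..N}. y i = c} = n"
    and N: "N = k * n" and n: "n \<ge> 1" and k: "k \<ge> 2" and s: "s > 0"
    and Fb: "\<forall>t. -1 \<le> t \<and> t \<le> 1 \<longrightarrow> f (arccos t) \<le> f0 + c * (t - 1)"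
    and c: "c \<ge> 1/2"
  defines "V \<equiv> ln (1 + (real k - 1) * exp (s * (-1 / (real k - 1) - f0)))"
  shows "V \<le> emp_risk f s k N y w z"
    and "emp_risk f s k N y w z = V \<Longrightarrow>
           (\<forall>i\<in>{1..k}. \<forall>j\<in>{1..k}. i \<noteq> j \<longrightarrow> w i \<bullet> w j = - 1 / (real k - 1)) \<and>
           (\<forall>i\<in>{1..N}. z i = w (y i))"
proof -
  define K where "K = real k - 1"
  have K: "K \<ge> 1" unfolding K_def using k by simp
  have K0: "K > 0" using K by simp
  define a where "a = s / K"
  have a: "a > 0" unfolding a_def using s K0 by simp
  define \<alpha> where "\<alpha> = 1 + K * c"
  have \<alpha>: "2 * \<alpha> > real k" "\<alpha> > 0"
  proof -
    have "K * c \<ge> K * (1/2)" using c K0 by (intro mult_left_mono) auto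
    then show "2 * \<alpha> > real k" "\<alpha> > 0" unfolding \<alpha>_def K_def by auto
  qed
  define S where "S = (\<Sum>j\<in>{1..k}. w j)"
  define xs where "xs = - 1 - K * f0"
  define p where "p = K * exp (a * xs) / (1 + K * exp (a * xs))"
  have p: "p > 0" unfolding p_def using K0 by (simp add: add_pos_pos)
  have NV: "V = ln (1 + K * exp (a * xs))"
  proof -
    have "a * xs = s * (-1 / K - f0)" unfolding a_def xs_def using K0 by (simp add: field_simps)
    then show ?thesis unfolding V_def K_def by simp
  qed
  have wn: "\<forall>j\<in>{1..k}. norm (w j) = 1" and zn: "\<forall>i\<in>{1..N}. norm (z i) = 1"
    using sph unfolding on_sphere_def by auto
  have bb: "-1 \<le> w j \<bullet> z i \<and> w j \<bullet> z i \<le> 1" if "j \<in> {1..k}" "i \<in> {1..N}" for i j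
  proof -
    have "\<bar>w j \<bullet> z i\<bar> \<le> norm (w j) * norm (z i)" by (rule Cauchy_Schwarz_ineq2)
    then show ?thesis using wn zn that by auto
  qed
  define F where "F i = f (arccos (w (y i) \<bullet> z i))" for i
  define J where "J i = {1..k} - {y i}" for i
  define u where "u i j = s * (w j \<bullet> z i - F i)" for i j
  define LL where "LL i = ln (1 + (\<Sum>j\<in>J i. exp (u i j)))" for i
  define \<mu> where "\<mu> i = (\<Sum>j\<in>J i. u i j) / real (card (J i))" for i
  define X where "X i = (S - \<alpha> *\<^sub>R w (y i)) \<bullet> z i - K * (f0 - c)" for i
  have cardJ: "real (card (J i)) = K" and Jne: "J i \<noteq> {}" and Jfin: "finite (J i)"
    if "i \<in> {1..N}" for i
  proof -
    have "y i \<in> {1..k}" using labels that by auto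
    then have "card (J i) = k - 1" unfolding J_def by simp
    then show "real (card (J i)) = K" unfolding K_def using k by simp
    show "finite (J i)" unfolding J_def by simp
    show "J i \<noteq> {}" using \<open>real (card (J i)) = K\<close> K0 by auto
  qed
  have emp: "emp_risk f s k N y w z = (1 / real N) * (\<Sum>i\<in>{1..N}. LL i)"
    unfolding emp_risk_def
  proof (rule arg_cong[where f="\<lambda>x. (1 / real N) * x"], rule sum.cong[OF refl])
    fix i assume i: "i \<in> {1..N}"
    have "\<forall>j\<in>{1..k} - {y i}. -1 \<le> w j \<bullet> z i \<and> w j \<bullet> z i \<le> 1" using bb i by auto
    from loss_rewrite[OF this, of s "F i"]
    show "- ln (exp (s * f (arccos (w (y i) \<bullet> z i))) /
              (exp (s * f (arccos (w (y i) \<bullet> z i)))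
               + (\<Sum>j\<in>{1..k} - {y i}. exp (s * cos (arccos (w j \<bullet> z i)))))) = LL i"
      unfolding LL_def u_def J_def F_def .
  qed
  \<comment> \<open>step 1: Jensen for exp\<close>
  have st1: "LL i \<ge> ln (1 + K * exp (\<mu> i))" if i: "i \<in> {1..N}" for i
  proof -
    have "real (card (J i)) * exp (\<mu> i) \<le> (\<Sum>j\<in>J i. exp (u i j))"
      unfolding \<mu>_def by (rule exp_tangent_sum(1)[OF Jfin[OF i] Jne[OF i]])
    then have "K * exp (\<mu> i) \<le> (\<Sum>j\<in>J i. exp (u i j))" using cardJ[OF i] by simp
    moreover have "0 < 1 + K * exp (\<mu> i)" using K0 by (simp add: add_pos_pos)
    ultimately show ?thesis unfolding LL_def by simp
  qed
  have st2: "\<mu> i \<ge> a * X i" if i: "i \<in> {1..N}" for i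
  proof -
    have yi: "y i \<in> {1..k}" using labels i by auto
    have sumw: "(\<Sum>j\<in>J i. w j \<bullet> z i) = (S - w (y i)) \<bullet> z i"
      unfolding J_def S_def using yi by (simp add: sum_diff1 inner_diff_left inner_sum_left)
    have "(\<Sum>j\<in>J i. u i j) = s * ((\<Sum>j\<in>J i. w j \<bullet> z i) - K * F i)"
      unfolding u_def using cardJ[OF i]
      by (simp add: sum_distrib_left[symmetric] sum_subtractf)
    then have mu: "\<mu> i = a * ((S - w (y i)) \<bullet> z i - K * F i)"
      unfolding \<mu>_def cardJ[OF i] sumw a_def by simp
    have t: "-1 \<le> w (y i) \<bullet> z i \<and> w (y i) \<bullet> z i \<le> 1" using bb yi i by auto
    have Fle: "F i \<le> f0 + c * (w (y i) \<bullet> z i - 1)" unfolding F_def using Fb t by blast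
    have "X i \<le> (S - w (y i)) \<bullet> z i - K * F i"
    proof -
      have "X i = (S - w (y i)) \<bullet> z i - K * c * (w (y i) \<bullet> z i) - K * (f0 - c)"
        unfolding X_def \<alpha>_def by (simp add: inner_diff_left algebra_simps)
      moreover have "K * F i \<le> K * (f0 + c * (w (y i) \<bullet> z i - 1))"
        using Fle K0 by simp
      ultimately show ?thesis by (simp add: algebra_simps)
    qed
    then show ?thesis unfolding mu using a by simp
  qed
  have st3: "LL i \<ge> V + a * p * (X i - xs)" if i: "i \<in> {1..N}" for i
  proof -
    have "V + a * p * (X i - xs) \<le> ln (1 + K * exp (a * X i))"
      unfolding NV p_def by (rule softplus_tangent[OF K0])
    also have "\<dots> \<le> ln (1 + K * exp (\<mu> i))"
      using st2[OF i] K0 by (simp add: add_pos_pos)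
    also have "\<dots> \<le> LL i" by (rule st1[OF i])
    finally show ?thesis .
  qed
  have cs1: "(\<Sum>i\<in>{1..N}. (S - \<alpha> *\<^sub>R w (y i)) \<bullet> z i) \<ge> - (real N * \<alpha>)"
    unfolding S_def by (rule cs_part(1)[OF sph labels fib N n \<alpha>])
  have sumX: "(\<Sum>i\<in>{1..N}. X i) = (\<Sum>i\<in>{1..N}. (S - \<alpha> *\<^sub>R w (y i)) \<bullet> z i) - real N * K * (f0 - c)"
    unfolding X_def by (simp add: sum_subtractf)
  have sumX2: "(\<Sum>i\<in>{1..N}. X i) - real N * xs = (\<Sum>i\<in>{1..N}. (S - \<alpha> *\<^sub>R w (y i)) \<bullet> z i) + real N * \<alpha>"
    unfolding sumX xs_def \<alpha>_def by (simp add: algebra_simps)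
  have sumq: "(\<Sum>i\<in>{1..N}. V + a * p * (X i - xs)) = real N * V + a * p * ((\<Sum>i\<in>{1..N}. X i) - real N * xs)"
    by (simp add: sum.distrib sum_distrib_left[symmetric] sum_subtractf algebra_simps)
  have apos: "a * p > 0" using a p by simp
  have gapnn: "a * p * ((\<Sum>i\<in>{1..N}. X i) - real N * xs) \<ge> 0"
    using apos cs1 unfolding sumX2 by simp
  have sumell: "(\<Sum>i\<in>{1..N}. LL i) \<ge> (\<Sum>i\<in>{1..N}. V + a * p * (X i - xs))"
    by (rule sum_mono) (rule st3)
  have Npos: "real N > 0" using N n k by simp
  have bound: "(\<Sum>i\<in>{1..N}. LL i) \<ge> real N * V" using sumell sumq gapnn by linarith
  show "V \<le> emp_risk f s k N y w z"
    unfolding emp using bound Npos by (simp add: field_simps)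
  assume eqV: "emp_risk f s k N y w z = V"
  have sumeq: "(\<Sum>i\<in>{1..N}. LL i) = real N * V"
    using eqV Npos unfolding emp by (simp add: field_simps)
  have "a * p * ((\<Sum>i\<in>{1..N}. X i) - real N * xs) \<le> 0" using sumell sumq sumeq by linarith
  then have "(\<Sum>i\<in>{1..N}. X i) - real N * xs \<le> 0"
    using apos mult_pos_pos[of "a * p" "(\<Sum>i\<in>{1..N}. X i) - real N * xs"] by linarith
  then have "(\<Sum>i\<in>{1..N}. (S - \<alpha> *\<^sub>R w (y i)) \<bullet> z i) = - (real N * \<alpha>)"
    using cs1 unfolding sumX2 by linarith
  from cs_part(2)[OF sph labels fib N n \<alpha>, folded S_def, OF this]
  have S0: "S = 0" and zw: "\<forall>i\<in>{1..N}. z i = w (y i)" by auto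
  have l1: "LL i = ln (1 + K * exp (\<mu> i))" if i: "i \<in> {1..N}" for i
  proof -
    have le: "\<forall>i\<in>{1..N}. 0 \<le> LL i - ln (1 + K * exp (\<mu> i))" using st1 by auto
    have "(\<Sum>i\<in>{1..N}. ln (1 + K * exp (\<mu> i))) \<ge> (\<Sum>i\<in>{1..N}. V + a * p * (X i - xs))"
    proof (rule sum_mono)
      fix i assume i: "i \<in> {1..N}"
      have "V + a * p * (X i - xs) \<le> ln (1 + K * exp (a * X i))"
        unfolding NV p_def by (rule softplus_tangent[OF K0])
      also have "\<dots> \<le> ln (1 + K * exp (\<mu> i))"
        using st2[OF i] K0 by (simp add: add_pos_pos)
      finally show "V + a * p * (X i - xs) \<le> ln (1 + K * exp (\<mu> i))" .
    qed
    then have "(\<Sum>i\<in>{1..N}. LL i - ln (1 + K * exp (\<mu> i))) \<le> 0"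
      using sumq gapnn sumeq by (simp add: sum_subtractf)
    moreover have "(\<Sum>i\<in>{1..N}. LL i - ln (1 + K * exp (\<mu> i))) \<ge> 0"
      by (rule sum_nonneg) (use le in blast)
    ultimately have "(\<Sum>i\<in>{1..N}. LL i - ln (1 + K * exp (\<mu> i))) = 0" by linarith
    then have "\<forall>i\<in>{1..N}. LL i - ln (1 + K * exp (\<mu> i)) = 0"
      using sum_nonneg_eq_0_iff[of "{1..N}" "\<lambda>i. LL i - ln (1 + K * exp (\<mu> i))"] le by simp
    then show ?thesis using i by simp
  qed
  have ueq: "\<forall>j\<in>J i. u i j = \<mu> i" if i: "i \<in> {1..N}" for i
  proof -
    have p1: "0 < 1 + K * exp (\<mu> i)" using K0 by (simp add: add_pos_pos)
    have p2: "0 < 1 + (\<Sum>j\<in>J i. exp (u i j))" by (simp add: add_pos_nonneg sum_nonneg)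
    have "ln (1 + (\<Sum>j\<in>J i. exp (u i j))) = ln (1 + K * exp (\<mu> i))" using l1[OF i] unfolding LL_def .
    then have "(\<Sum>j\<in>J i. exp (u i j)) = K * exp (\<mu> i)" using p1 p2 by simp
    then have "(\<Sum>j\<in>J i. exp (u i j)) = real (card (J i)) * exp (\<mu> i)" using cardJ[OF i] by simp
    then show ?thesis unfolding \<mu>_def by (rule exp_tangent_sum(2)[OF Jfin[OF i] Jne[OF i]])
  qed
  have etf: "w b \<bullet> w a = - 1 / K" if ab: "a \<in> {1..k}" "b \<in> {1..k}" "a \<noteq> b" for a b
  proof -
    have "card {i\<in>{1..N}. y i = a} = n" using fib ab by auto
    then have "card {i\<in>{1..N}. y i = a} \<noteq> 0" using n by simp
    then have "{i\<in>{1..N}. y i = a} \<noteq> {}" by (metis card.empty)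
    then obtain i where i: "i \<in> {1..N}" "y i = a" by auto
    have zi: "z i = w a" using zw i by auto
    define \<gamma> where "\<gamma> = \<mu> i / s + F i"
    have gam: "w j \<bullet> w a = \<gamma>" if "j \<in> J i" for j
    proof -
      have "s * (w j \<bullet> w a - F i) = \<mu> i" using ueq[OF i(1)] that zi unfolding u_def by auto
      then show ?thesis unfolding \<gamma>_def using s by (simp add: field_simps)
    qed
    have "(\<Sum>j\<in>J i. w j \<bullet> w a) = (S - w a) \<bullet> w a"
      unfolding J_def S_def using ab i by (simp add: sum_diff1 inner_diff_left inner_sum_left)
    also have "\<dots> = -1" using S0 wn ab by (simp add: norm_eq_1)
    finally have "(\<Sum>j\<in>J i. w j \<bullet> w a) = -1" .
    moreover have "(\<Sum>j\<in>J i. w j \<bullet> w a) = K * \<gamma>"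
      using gam cardJ[OF i(1)] by simp
    ultimately have "\<gamma> = -1 / K" using K0 by (simp add: field_simps)
    moreover have "b \<in> J i" unfolding J_def using ab i by auto
    ultimately show ?thesis using gam by simp
  qed
  show "(\<forall>i\<in>{1..k}. \<forall>j\<in>{1..k}. i \<noteq> j \<longrightarrow> w i \<bullet> w j = - 1 / (real k - 1)) \<and>
           (\<forall>i\<in>{1..N}. z i = w (y i))"
    using etf zw unfolding K_def by (auto simp: inner_commute)
qed

lemma arc_aux:
  fixes m u :: real
  assumes m: "0 \<le> m" "m \<le> pi / 3" and u: "0 \<le> u" "u \<le> pi / 2"
  shows "sin u \<le> 2 * sin (m + u)"
proof (cases "m + u \<le> pi / 2")
  case True
  have "sin u \<le> sin (m + u)" using sin_mono_le_eq[of u "m + u"] m u True by simp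
  moreover have "0 \<le> sin (m + u)" using True m u by (intro sin_ge_zero) auto
  ultimately show ?thesis by simp
next
  case False
  have "sin (m + u) = sin (pi - (m + u))" by simp
  also have "sin (pi / 6) \<le> sin (pi - (m + u))"
    using sin_mono_le_eq[of "pi/6" "pi - (m + u)"] m u False by simp
  finally have "1/2 \<le> sin (m + u)" by (simp add: sin_30)
  moreover have "sin u \<le> 1" by simp
  ultimately show ?thesis using sin_le_one[of u] by linarith
qed

lemma arcface_bound:
  fixes m \<theta> :: real
  assumes m: "0 \<le> m" "m \<le> pi / 2" "cos m \<ge> 1/2" and th: "0 \<le> \<theta>" "\<theta> \<le> pi"
  shows "cos (\<theta> + m) \<le> cos m + (1/2) * (cos \<theta> - 1)"
proof -
  have iff: "cos (pi/3) \<le> cos m \<longleftrightarrow> m \<le> pi/3" by (rule cos_mono_le_eq) (use m in auto)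
  have "cos (pi/3) \<le> cos m" using m by (simp add: cos_60)
  then have m3: "m \<le> pi / 3" using iff by blast
  define u where "u = \<theta> / 2"
  have th2: "\<theta> = 2 * u" unfolding u_def by simp
  have su: "0 \<le> sin u" using th unfolding u_def by (intro sin_ge_zero) auto
  have key: "sin u \<le> 2 * sin (m + u)" using arc_aux[OF m(1) m3, of u] th unfolding u_def by simp
  have "cos m + (1/2) * (cos \<theta> - 1) - cos (\<theta> + m) = sin u * (2 * sin (m + u) - sin u)"
    unfolding th2 cos_add sin_double cos_double_sin sin_add
    by (simp add: algebra_simps power2_eq_square)
  also have "\<dots> \<ge> 0" using su key by simp
  finally show ?thesis by simp
qed

lemma asoftmax_bound:
  fixes m :: nat and \<theta> :: real
  assumes m: "m \<ge> 1" and th: "0 \<le> \<theta>" "\<theta> \<le> pi"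
  shows "asoftmax m \<theta> \<le> cos \<theta>"
proof -
  define l where "l = min (m - 1) (nat \<lfloor>real m * \<theta> / pi\<rfloor>)"
  have f: "asoftmax m \<theta> = (-1) ^ l * cos (real m * \<theta>) - 2 * real l"
    unfolding asoftmax_def l_def Let_def ..
  show ?thesis
  proof (cases "l = 0")
    case True
    have "cos (real m * \<theta>) \<le> cos \<theta>"
    proof (cases "m = 1")
      case True then show ?thesis by simp
    next
      case False
      define X where "X = nat \<lfloor>real m * \<theta> / pi\<rfloor>"
      have "m - 1 \<noteq> 0" using False m by simp
      then have "X = 0" using \<open>l = 0\<close> unfolding l_def X_def[symmetric] by (simp add: min_def split: if_splits)
      then have "\<lfloor>real m * \<theta> / pi\<rfloor> \<le> 0" unfolding X_def by simp
      then have "real m * \<theta> / pi < 1" by (simp add: floor_le_iff)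
      then have lt: "real m * \<theta> < pi" using pi_gt_zero by (simp add: divide_less_eq)
      have "\<theta> \<le> real m * \<theta>" using m th by (simp add: mult_le_cancel_right1)
      then show ?thesis using cos_mono_le_eq[of "real m * \<theta>" \<theta>] th lt by simp
    qed
    then show ?thesis using f True by simp
  next
    case False
    have "(-1) ^ l * cos (real m * \<theta>) \<le> 1"
    proof -
      have "\<bar>(-1) ^ l * cos (real m * \<theta>)\<bar> \<le> 1" by (simp add: abs_mult)
      then show ?thesis by simp
    qed
    moreover have "real l \<ge> 1" using False by simp
    moreover have "-1 \<le> cos \<theta>" by simp
    ultimately show ?thesis using f by linarith
  qed
qed

lemma asoftmax_0: "m \<ge> 1 \<Longrightarrow> asoftmax m 0 = 1"
  unfolding asoftmax_def by simp

lemma etf_value: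
  fixes f :: "real \<Rightarrow> real" and s f0 :: real and k N :: nat and y :: "nat \<Rightarrow> nat"
    and w z :: "nat \<Rightarrow> real^'n::finite"
  assumes sph: "on_sphere k N w z"
    and labels: "\<forall>i\<in>{1..N}. y i \<in> {1..k}"
    and k: "k \<ge> 2" and N: "N \<ge> 1"
    and etf: "\<forall>i\<in>{1..k}. \<forall>j\<in>{1..k}. i \<noteq> j \<longrightarrow> w i \<bullet> w j = - 1 / (real k - 1)"
    and zw: "\<forall>i\<in>{1..N}. z i = w (y i)"
    and f0: "f 0 = f0"
  shows "emp_risk f s k N y w z = ln (1 + (real k - 1) * exp (s * (-1 / (real k - 1) - f0)))"
proof -
  define V where "V = ln (1 + (real k - 1) * exp (s * (-1 / (real k - 1) - f0)))"
  have wn: "\<forall>j\<in>{1..k}. norm (w j) = 1" using sph unfolding on_sphere_def by auto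
  have tm: "- ln (exp (s * f (arccos (w (y i) \<bullet> z i))) /
              (exp (s * f (arccos (w (y i) \<bullet> z i)))
               + (\<Sum>j\<in>{1..k} - {y i}. exp (s * cos (arccos (w j \<bullet> z i)))))) = V"
    if i: "i \<in> {1..N}" for i
  proof -
    have yi: "y i \<in> {1..k}" using labels i by auto
    have zi: "z i = w (y i)" using zw i by auto
    have b: "\<forall>j\<in>{1..k} - {y i}. w j \<bullet> z i = - 1 / (real k - 1)" using etf yi zi by auto
    have bb: "\<forall>j\<in>{1..k} - {y i}. -1 \<le> w j \<bullet> z i \<and> w j \<bullet> z i \<le> 1"
    proof -
      have "-1 \<le> - 1 / (real k - 1)" using k by (simp add: field_simps)
      moreover have "- 1 / (real k - 1) \<le> 1" using k by (simp add: field_simps)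
      ultimately show ?thesis using b by auto
    qed
    have one: "w (y i) \<bullet> z i = 1" using zi wn yi by (simp add: norm_eq_1)
    have "(\<Sum>j\<in>{1..k} - {y i}. exp (s * (w j \<bullet> z i - f (arccos (w (y i) \<bullet> z i)))))
        = (\<Sum>j\<in>{1..k} - {y i}. exp (s * (- 1 / (real k - 1) - f0)))"
      by (rule sum.cong) (use b one f0 in auto)
    also have "\<dots> = (real k - 1) * exp (s * (- 1 / (real k - 1) - f0))"
      using yi k by (simp add: of_nat_diff)
    finally have "(\<Sum>j\<in>{1..k} - {y i}. exp (s * (w j \<bullet> z i - f (arccos (w (y i) \<bullet> z i)))))
        = (real k - 1) * exp (s * (- 1 / (real k - 1) - f0))" .
    then show ?thesis using loss_rewrite[OF bb, of s "f (arccos (w (y i) \<bullet> z i))"]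
      unfolding V_def by simp
  qed
  have "emp_risk f s k N y w z = (1 / real N) * (\<Sum>i\<in>{1..N}. V)"
    unfolding emp_risk_def by (rule arg_cong[where f="\<lambda>x. (1 / real N) * x"], rule sum.cong[OF refl]) (rule tm)
  also have "\<dots> = V" using N by simp
  finally show ?thesis unfolding V_def .
qed

lemma etf_exists:
  assumes k: "2 \<le> k" "k \<le> CARD('n::finite) + 1"
  shows "\<exists>w :: nat \<Rightarrow> real^'n. (\<forall>j\<in>{1..k}. norm (w j) = 1) \<and>
           (\<forall>i\<in>{1..k}. \<forall>j\<in>{1..k}. i \<noteq> j \<longrightarrow> w i \<bullet> w j = - 1 / (real k - 1))"
proof -
  define p where "p = k - 1"
  have p1: "p \<ge> 1" and kp: "k = p + 1" using k unfolding p_def by auto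
  have "card {1..p} \<le> card (UNIV :: 'n set)" using k unfolding p_def by simp
  then obtain g :: "nat \<Rightarrow> 'n" where g: "inj_on g {1..p}"
    using card_le_inj[of "{1..p}" "UNIV :: 'n set"] by auto
  define E :: "nat \<Rightarrow> real^'n" where "E j = axis (g j) 1" for j
  define U where "U = (\<Sum>l\<in>{1..p}. E l)"
  define P where "P = real p"
  have P: "P \<ge> 1" unfolding P_def using p1 by simp
  define q where "q = sqrt P"
  have q: "q > 0" "q * q = P" unfolding q_def using P by auto
  define A where "A = sqrt ((P + 1) / P)"
  have A2: "A * A = (P + 1) / P" unfolding A_def using P by simp
  define B where "B = (1 / q - A) / P"
  define C where "C = - 1 / q"
  have AB: "A + P * B = 1 / q" unfolding B_def using P by simp
  have C2: "C * C * P = 1" unfolding C_def using q P by (simp add: field_simps)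
  have key: "2 * A * B + P * B * B = - 1 / P"
  proof -
    have "P * (2 * A * B + P * B * B) = (A + P * B) * (A + P * B) - A * A" by (simp add: algebra_simps)
    also have "\<dots> = 1 / P - (P + 1) / P" unfolding AB A2 using q by (simp add: field_simps)
    also have "\<dots> = -1" using P by (simp add: field_simps)
    finally show ?thesis using P by (simp add: field_simps)
  qed
  have EE: "E i \<bullet> E j = (if i = j then 1 else 0)" if "i \<in> {1..p}" "j \<in> {1..p}" for i j
    using g that unfolding E_def inner_axis_axis by (auto dest: inj_onD)
  have EU: "E j \<bullet> U = 1" if "j \<in> {1..p}" for j
  proof -
    have "E j \<bullet> U = (\<Sum>l\<in>{1..p}. E j \<bullet> E l)" unfolding U_def by (simp add: inner_sum_right)
    also have "\<dots> = (\<Sum>l\<in>{1..p}. if j = l then 1 else 0)" by (rule sum.cong) (use EE that in auto)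
    also have "\<dots> = 1" using that by simp
    finally show ?thesis .
  qed
  have UU: "U \<bullet> U = P"
  proof -
    have "U \<bullet> U = (\<Sum>l\<in>{1..p}. E l \<bullet> U)" unfolding U_def by (simp add: inner_sum_left)
    also have "\<dots> = (\<Sum>l\<in>{1..p}. 1)" by (rule sum.cong) (use EU in auto)
    finally show ?thesis unfolding P_def by simp
  qed
  have UE: "U \<bullet> E j = 1" if "j \<in> {1..p}" for j using EU[OF that] by (simp add: inner_commute)
  define w where "w j = (if j \<le> p then A *\<^sub>R E j + B *\<^sub>R U else C *\<^sub>R U)" for j
  have kP: "real k - 1 = P" unfolding P_def kp by simp
  have inn: "w i \<bullet> w j = (if i = j then 1 else - 1 / P)" if "i \<in> {1..k}" "j \<in> {1..k}" for i j
  proof (cases "i \<le> p")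
    case Ti: True
    show ?thesis
    proof (cases "j \<le> p")
      case Tj: True
      have ip: "i \<in> {1..p}" "j \<in> {1..p}" using Ti Tj that by auto
      have "w i \<bullet> w j = A * A * (E i \<bullet> E j) + A * B * (E i \<bullet> U) + B * A * (U \<bullet> E j) + B * B * (U \<bullet> U)"
        unfolding w_def using Ti Tj by (simp add: inner_add_left inner_add_right algebra_simps)
      also have "\<dots> = A * A * (if i = j then 1 else 0) + 2 * A * B + P * B * B"
        using EE[OF ip] EU ip UU UE by simp
      finally have ww: "w i \<bullet> w j = A * A * (if i = j then 1 else 0) + 2 * A * B + P * B * B" .
      show ?thesis
      proof (cases "i = j")
        case True
        have "A * A + (2 * A * B + P * B * B) = 1" unfolding key A2 using P by (simp add: field_simps)
        then show ?thesis using ww True by simp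
      next
        case False
        then show ?thesis using ww key by simp
      qed
    next
      case Fj: False
      have "w i \<bullet> w j = A * C * (E i \<bullet> U) + B * C * (U \<bullet> U)"
        unfolding w_def using Ti Fj by (simp add: inner_add_left inner_add_right algebra_simps)
      also have "\<dots> = C * (A + P * B)" using EU Ti that UU by (simp add: algebra_simps)
      also have "\<dots> = - 1 / P" unfolding AB C_def using q by (simp add: field_simps)
      finally show ?thesis using Ti Fj by auto
    qed
  next
    case Fi: False
    show ?thesis
    proof (cases "j \<le> p")
      case Tj: True
      have "w i \<bullet> w j = A * C * (E j \<bullet> U) + B * C * (U \<bullet> U)"
        unfolding w_def using Fi Tj UE EU that by (simp add: inner_add_left inner_add_right algebra_simps)
      also have "\<dots> = C * (A + P * B)" using EU Tj that UU by (simp add: algebra_simps)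
      also have "\<dots> = - 1 / P" unfolding AB C_def using q by (simp add: field_simps)
      finally show ?thesis using Fi Tj by auto
    next
      case Fj: False
      have "i = j" using Fi Fj that kp by auto
      have "w i \<bullet> w j = C * C * P" unfolding w_def using Fi Fj UU by simp
      then show ?thesis using C2 \<open>i = j\<close> by simp
    qed
  qed
  have "\<forall>j\<in>{1..k}. norm (w j) = 1" using inn by (simp add: norm_eq_1)
  moreover have "\<forall>i\<in>{1..k}. \<forall>j\<in>{1..k}. i \<noteq> j \<longrightarrow> w i \<bullet> w j = - 1 / (real k - 1)"
    using inn kP by simp
  ultimately show ?thesis by blast
qed

lemma f_props:
  assumes f: "f = normface
          \<or> (\<exists>m::real. m \<ge> 0 \<and> f = cosface m)
          \<or> (\<exists>m::real. 0 \<le> m \<and> m \<le> pi / 2 \<and> cos m \<ge> 1 / 2 \<and> f = arcface m)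
          \<or> (\<exists>m::nat. m \<ge> 1 \<and> f = asoftmax m)"
  shows "\<exists>f0 c. (\<forall>t. -1 \<le> t \<and> t \<le> 1 \<longrightarrow> f (arccos t) \<le> f0 + c * (t - 1)) \<and> c \<ge> 1/2 \<and> f 0 = f0"
  using f
proof (elim disjE exE conjE)
  assume "f = normface"
  then show ?thesis by (intro exI[of _ 1] exI[of _ 1]) (auto simp: normface_def)
next
  fix m :: real assume "f = cosface m"
  then show ?thesis by (intro exI[of _ "1 - m"] exI[of _ 1]) (auto simp: cosface_def)
next
  fix m :: real assume m: "0 \<le> m" "m \<le> pi / 2" "cos m \<ge> 1 / 2" and fm: "f = arcface m"
  show ?thesis
  proof (rule exI[of _ "cos m"], rule exI[of _ "1/2"], intro conjI allI impI)
    fix t :: real assume t: "-1 \<le> t \<and> t \<le> 1"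
    have "cos (arccos t + m) \<le> cos m + (1/2) * (cos (arccos t) - 1)"
      using arcface_bound[OF m, of "arccos t"] t arccos_lbound arccos_ubound by auto
    then show "f (arccos t) \<le> cos m + 1/2 * (t - 1)" using t fm unfolding arcface_def by simp
  qed (auto simp: fm arcface_def)
next
  fix m :: nat assume m: "m \<ge> 1" and fm: "f = asoftmax m"
  show ?thesis
  proof (intro exI[of _ 1] exI[of _ 1] conjI allI impI)
    fix t :: real assume t: "-1 \<le> t \<and> t \<le> 1"
    have "asoftmax m (arccos t) \<le> cos (arccos t)"
      using asoftmax_bound[OF m, of "arccos t"] t arccos_lbound arccos_ubound by auto
    then show "f (arccos t) \<le> 1 + 1 * (t - 1)" using t fm by simp
  qed (auto simp: fm asoftmax_0[OF m])
qed

theorem proposition2: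
  fixes f :: "real \<Rightarrow> real" and s :: real and k N :: nat and y :: "nat \<Rightarrow> nat"
    and w z :: "nat \<Rightarrow> real^'n::finite"
  assumes d: "CARD('n) \<ge> 2"
    and k: "2 \<le> k" "k \<le> CARD('n) + 1"
    and labels: "\<forall>i\<in>{1..N}. y i \<in> {1..k}"
    and balanced: "\<exists>n\<ge>1. N = k * n \<and> (\<forall>c\<in>{1..k}. card {i\<in>{1..N}. y i = c} = n)"
    and s: "s > 0"
    and f: "f = normface
          \<or> (\<exists>m::real. m \<ge> 0 \<and> f = cosface m)
          \<or> (\<exists>m::real. 0 \<le> m \<and> m \<le> pi / 2 \<and> cos m \<ge> 1 / 2 \<and> f = arcface m)
          \<or> (\<exists>m::nat. m \<ge> 1 \<and> f = asoftmax m)"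
  shows "is_minimizer f s k N y w z \<longleftrightarrow>
           on_sphere k N w z \<and>
           (\<forall>i\<in>{1..k}. \<forall>j\<in>{1..k}. i \<noteq> j \<longrightarrow> w i \<bullet> w j = - 1 / (real k - 1)) \<and>
           (\<forall>i\<in>{1..N}. z i = w (y i))"
proof -
  obtain n where n: "n \<ge> 1" and N: "N = k * n" and fib: "\<forall>c\<in>{1..k}. card {i\<in>{1..N}. y i = c} = n"
    using balanced by auto
  obtain f0 c where Fb: "\<forall>t. -1 \<le> t \<and> t \<le> 1 \<longrightarrow> f (arccos t) \<le> f0 + c * (t - 1)"
    and c: "c \<ge> 1/2" and f0: "f 0 = f0"
    using f_props[OF f] by blast
  define V where "V = ln (1 + (real k - 1) * exp (s * (-1 / (real k - 1) - f0)))"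
  have N1: "N \<ge> 1" using N n k by simp
  have lb: "V \<le> emp_risk f s k N y w' z'" if "on_sphere k N w' z'" for w' z' :: "nat \<Rightarrow> real^'n"
    unfolding V_def by (rule main_bound(1)[OF that labels fib N n k(1) s Fb c])
  show ?thesis
  proof
    assume mini: "is_minimizer f s k N y w z"
    have sph: "on_sphere k N w z" using mini unfolding is_minimizer_def by simp
    obtain w0 :: "nat \<Rightarrow> real^'n" where w0: "\<forall>j\<in>{1..k}. norm (w0 j) = 1"
      "\<forall>i\<in>{1..k}. \<forall>j\<in>{1..k}. i \<noteq> j \<longrightarrow> w0 i \<bullet> w0 j = - 1 / (real k - 1)"
      using etf_exists[OF k] by blast
    define z0 where "z0 i = w0 (y i)" for i
    have sph0: "on_sphere k N w0 z0" unfolding on_sphere_def z0_def using w0(1) labels by auto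
    have "emp_risk f s k N y w0 z0 = V"
    proof -
      have zw0: "\<forall>i\<in>{1..N}. z0 i = w0 (y i)" by (simp add: z0_def)
      show ?thesis unfolding V_def using etf_value[OF sph0 labels k(1) N1 w0(2) zw0, of f f0 s] f0 by simp
    qed
    moreover have "emp_risk f s k N y w z \<le> emp_risk f s k N y w0 z0"
      using mini sph0 unfolding is_minimizer_def by blast
    ultimately have "emp_risk f s k N y w z = V" using lb[OF sph] by linarith
    then have "(\<forall>i\<in>{1..k}. \<forall>j\<in>{1..k}. i \<noteq> j \<longrightarrow> w i \<bullet> w j = - 1 / (real k - 1)) \<and>
           (\<forall>i\<in>{1..N}. z i = w (y i))"
      unfolding V_def by (rule main_bound(2)[OF sph labels fib N n k(1) s Fb c])
    then show "on_sphere k N w z \<and>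
           (\<forall>i\<in>{1..k}. \<forall>j\<in>{1..k}. i \<noteq> j \<longrightarrow> w i \<bullet> w j = - 1 / (real k - 1)) \<and>
           (\<forall>i\<in>{1..N}. z i = w (y i))" using sph by simp
  next
    assume H: "on_sphere k N w z \<and>
           (\<forall>i\<in>{1..k}. \<forall>j\<in>{1..k}. i \<noteq> j \<longrightarrow> w i \<bullet> w j = - 1 / (real k - 1)) \<and>
           (\<forall>i\<in>{1..N}. z i = w (y i))"
    have "emp_risk f s k N y w z = V"
    proof -
      have h1: "on_sphere k N w z" and h2: "\<forall>i\<in>{1..k}. \<forall>j\<in>{1..k}. i \<noteq> j \<longrightarrow> w i \<bullet> w j = - 1 / (real k - 1)"
        and h3: "\<forall>i\<in>{1..N}. z i = w (y i)" using H by simp_all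
      show ?thesis unfolding V_def by (rule etf_value[OF h1 labels k(1) N1 h2 h3, of f f0 s, OF f0])
    qed
    then show "is_minimizer f s k N y w z"
      unfolding is_minimizer_def using H lb by auto
  qed
qed

end
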